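(* Let $n\in\mathbb{N}$ and $m=(n-1)^2+1$. Let $G$ be a finite group of order $mn$ and $H$ a normal subgroup of $G$ of order $n$. Suppose $D$ is an $(mn,(n-1)^2+n,n)$-difference set in $G$ with $H\subseteq D$, and let $R=D\setminus H$. Then (i) $R$ is an $(m,n,m-1,n-2)$-relative difference set in $G$ relative to $H$; (ii) the family $\{hR: h\in H\}$ is an $(n[(n-1)^2+1],n,(n-1)^2,n(n-2),0)$-DPDF and an $(n[(n-1)^2+1],n,(n-1)^2,n(n-1)(n-2),n(n-1)^2)$-EPDF in $G$.
   Context: Groups are written multiplicatively with identity $e$; $G^*=G\setminus\{e\}$; $hR=\{hr:r\in R\}$. For $D\subseteq G$, $\Delta(D)$ is the multiset $\{xy^{-1}: x,y\in D, x\ne y\}$; for $D_1,D_2\subseteq G$, $\Delta(D_1,D_2)$ is the multiset $\{xy^{-1}:x\in D_1,y\in D_2\}$. A $(v,k,\lambda)$-difference set in a group of order $v$ is a $k$-subset $D$ such that $\Delta(D)$ contains each element of $G^*$ exactly $\lambda$ times. If $|G|=mn$ and $H$ is a normal subgroup of order $n$, a $k$-subset $R$ is an $(m,n,k,\lambda)$-relative difference set relative to $H$ if $\Delta(R)$ contains each element of $G\setminus H$ exactly $\lambda$ times and no element of $H\setminus\{e\}$. For a family $A=\{A_1,\dots,A_s\}$ of pairwise disjoint subsets, ${\rm Int}(A)=\bigcup_i\Delta(A_i)$ and ${\rm Ext}(A)=\bigcup_{i\ne j}\Delta(A_i,A_j)$ (multiset unions). For $|G|=v$, a $(v,s,k,\lambda,\mu)$-DPDF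 is a family of $s$ pairwise disjoint $k$-subsets of $G^*$ with union $S$ such that ${\rm Int}(A)$ contains each element of $S$ exactly $\lambda$ times and each element of $G\setminus(S\cup\{e\})$ exactly $\mu$ times; a $(v,s,k,\lambda,\mu)$-EPDF is defined the same way using ${\rm Ext}(A)$. *)

theory Defs
  imports "HOL-Algebra.Algebra" "HOL-Library.Multiset"
begin

definition diff_mset :: "('a, 'b) monoid_scheme \<Rightarrow> 'a set \<Rightarrow> 'a multiset" where
  "diff_mset G D = image_mset (\<lambda>(x, y). x \<otimes>\<^bsub>G\<^esub> inv\<^bsub>G\<^esub> y)
      (mset_set {(x, y). x \<in> D \<and> y \<in> D \<and> x \<noteq> y})"

definition diff2_mset :: "('a, 'b) monoid_scheme \<Rightarrow> 'a set \<Rightarrow> 'a set \<Rightarrow> 'a multiset" where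
  "diff2_mset G D1 D2 = image_mset (\<lambda>(x, y). x \<otimes>\<^bsub>G\<^esub> inv\<^bsub>G\<^esub> y) (mset_set (D1 \<times> D2))"

definition difference_set ::
  "('a, 'b) monoid_scheme \<Rightarrow> nat \<Rightarrow> nat \<Rightarrow> nat \<Rightarrow> 'a set \<Rightarrow> bool" where
  "difference_set G v k lam D \<longleftrightarrow>
     order G = v \<and> D \<subseteq> carrier G \<and> card D = k \<and>
     (\<forall>g \<in> carrier G - {\<one>\<^bsub>G\<^esub>}. count (diff_mset G D) g = lam)"

definition relative_difference_set ::
  "('a, 'b) monoid_scheme \<Rightarrow> nat \<Rightarrow> nat \<Rightarrow> nat \<Rightarrow> nat \<Rightarrow> 'a set \<Rightarrow> 'a set \<Rightarrow> bool" where
  "relative_difference_set G m n k lam H R \<longleftrightarrow>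
     order G = m * n \<and> H \<lhd> G \<and> card H = n \<and>
     R \<subseteq> carrier G \<and> card R = k \<and>
     (\<forall>g \<in> carrier G - H. count (diff_mset G R) g = lam) \<and>
     (\<forall>g \<in> H - {\<one>\<^bsub>G\<^esub>}. count (diff_mset G R) g = 0)"

definition disjoint_family_ksub ::
  "('a, 'b) monoid_scheme \<Rightarrow> nat \<Rightarrow> nat \<Rightarrow> 'i set \<Rightarrow> ('i \<Rightarrow> 'a set) \<Rightarrow> bool" where
  "disjoint_family_ksub G s k I A \<longleftrightarrow>
     finite I \<and> card I = s \<and>
     (\<forall>i \<in> I. A i \<subseteq> carrier G - {\<one>\<^bsub>G\<^esub>} \<and> card (A i) = k) \<and>
     (\<forall>i \<in> I. \<forall>j \<in> I. i \<noteq> j \<longrightarrow> A i \<inter> A j = {})"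

definition Int_mset :: "('a, 'b) monoid_scheme \<Rightarrow> 'i set \<Rightarrow> ('i \<Rightarrow> 'a set) \<Rightarrow> 'a multiset" where
  "Int_mset G I A = (\<Sum>i \<in> I. diff_mset G (A i))"

definition Ext_mset :: "('a, 'b) monoid_scheme \<Rightarrow> 'i set \<Rightarrow> ('i \<Rightarrow> 'a set) \<Rightarrow> 'a multiset" where
  "Ext_mset G I A = (\<Sum>i \<in> I. \<Sum>j \<in> I - {i}. diff2_mset G (A i) (A j))"

definition DPDF ::
  "('a, 'b) monoid_scheme \<Rightarrow> nat \<Rightarrow> nat \<Rightarrow> nat \<Rightarrow> nat \<Rightarrow> nat \<Rightarrow> 'i set \<Rightarrow> ('i \<Rightarrow> 'a set) \<Rightarrow> bool" where
  "DPDF G v s k lam mu I A \<longleftrightarrow>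
     order G = v \<and> disjoint_family_ksub G s k I A \<and>
     (\<forall>g \<in> (\<Union>i\<in>I. A i). count (Int_mset G I A) g = lam) \<and>
     (\<forall>g \<in> carrier G - ((\<Union>i\<in>I. A i) \<union> {\<one>\<^bsub>G\<^esub>}). count (Int_mset G I A) g = mu)"

definition EPDF ::
  "('a, 'b) monoid_scheme \<Rightarrow> nat \<Rightarrow> nat \<Rightarrow> nat \<Rightarrow> nat \<Rightarrow> nat \<Rightarrow> 'i set \<Rightarrow> ('i \<Rightarrow> 'a set) \<Rightarrow> bool" where
  "EPDF G v s k lam mu I A \<longleftrightarrow>
     order G = v \<and> disjoint_family_ksub G s k I A \<and>
     (\<forall>g \<in> (\<Union>i\<in>I. A i). count (Ext_mset G I A) g = lam) \<and>
     (\<forall>g \<in> carrier G - ((\<Union>i\<in>I. A i) \<union> {\<one>\<^bsub>G\<^esub>}). count (Ext_mset G I A) g = mu)"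

end

theory Submission
  imports Defs
begin

lemma count_img_card:
  "finite A \<Longrightarrow> count (image_mset f (mset_set A)) g = card {a\<in>A. f a = g}"
  by (auto simp: count_image_mset vimage_def intro!: arg_cong[where f=card])

definition Ncnt :: "('a, 'b) monoid_scheme \<Rightarrow> 'a set \<Rightarrow> 'a set \<Rightarrow> 'a \<Rightarrow> nat" where
  "Ncnt G A B g = card {y\<in>B. g \<otimes>\<^bsub>G\<^esub> y \<in> A}"

lemma (in group) cnt_diff:
  assumes "A \<subseteq> carrier G" "finite A" "g \<in> carrier G" "g \<noteq> \<one>"
  shows "count (diff_mset G A) g = Ncnt G A A g"
proof -
  have fin: "finite {(x, y). x \<in> A \<and> y \<in> A \<and> x \<noteq> y}"
    by (rule finite_subset[of _ "A \<times> A"]) (use assms in auto)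
  have "count (diff_mset G A) g = card {p \<in> {(x, y). x \<in> A \<and> y \<in> A \<and> x \<noteq> y}. (\<lambda>(x, y). x \<otimes> inv y) p = g}"
    unfolding diff_mset_def by (rule count_img_card[OF fin])
  also have "{p \<in> {(x, y). x \<in> A \<and> y \<in> A \<and> x \<noteq> y}. (\<lambda>(x, y). x \<otimes> inv y) p = g}
     = (\<lambda>y. (g \<otimes> y, y)) ` {y\<in>A. g \<otimes> y \<in> A}"
  proof (intro Set.set_eqI HOL.iffI)
    fix p assume "p \<in> {p \<in> {(x, y). x \<in> A \<and> y \<in> A \<and> x \<noteq> y}. (\<lambda>(x, y). x \<otimes> inv y) p = g}"
    then obtain x y where p: "p = (x, y)" "x \<in> A" "y \<in> A" "x \<otimes> inv y = g" by auto
    then have "x = g \<otimes> y" using assms by (metis inv_solve_right subsetD)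
    then show "p \<in> (\<lambda>y. (g \<otimes> y, y)) ` {y\<in>A. g \<otimes> y \<in> A}" using p by auto
  next
    fix p assume "p \<in> (\<lambda>y. (g \<otimes> y, y)) ` {y\<in>A. g \<otimes> y \<in> A}"
    then obtain y where p: "p = (g \<otimes> y, y)" "y \<in> A" "g \<otimes> y \<in> A" by auto
    have y: "y \<in> carrier G" using p assms by auto
    have "g \<otimes> y \<otimes> inv y = g" using y assms by (simp add: m_assoc)
    moreover have "g \<otimes> y \<noteq> y" using y assms by (metis l_one r_cancel one_closed)
    ultimately show "p \<in> {p \<in> {(x, y). x \<in> A \<and> y \<in> A \<and> x \<noteq> y}. (\<lambda>(x, y). x \<otimes> inv y) p = g}"
      using p by auto
  qed
  also have "card \<dots> = Ncnt G A A g" unfolding Ncnt_def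
    by (rule card_image) (auto simp: inj_on_def)
  finally show ?thesis .
qed

lemma (in group) cnt_diff2:
  assumes "A \<subseteq> carrier G" "B \<subseteq> carrier G" "finite A" "finite B" "g \<in> carrier G"
  shows "count (diff2_mset G A B) g = Ncnt G A B g"
proof -
  have fin: "finite (A \<times> B)" using assms by auto
  have "count (diff2_mset G A B) g = card {p \<in> A \<times> B. (\<lambda>(x, y). x \<otimes> inv y) p = g}"
    unfolding diff2_mset_def by (rule count_img_card[OF fin])
  also have "{p \<in> A \<times> B. (\<lambda>(x, y). x \<otimes> inv y) p = g}
     = (\<lambda>y. (g \<otimes> y, y)) ` {y\<in>B. g \<otimes> y \<in> A}"
  proof (intro Set.set_eqI HOL.iffI)
    fix p assume "p \<in> {p \<in> A \<times> B. (\<lambda>(x, y). x \<otimes> inv y) p = g}"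
    then obtain x y where p: "p = (x, y)" "x \<in> A" "y \<in> B" "x \<otimes> inv y = g" by auto
    then have "x = g \<otimes> y" using assms by (metis inv_solve_right subsetD)
    then show "p \<in> (\<lambda>y. (g \<otimes> y, y)) ` {y\<in>B. g \<otimes> y \<in> A}" using p by auto
  next
    fix p assume "p \<in> (\<lambda>y. (g \<otimes> y, y)) ` {y\<in>B. g \<otimes> y \<in> A}"
    then obtain y where p: "p = (g \<otimes> y, y)" "y \<in> B" "g \<otimes> y \<in> A" by auto
    have y: "y \<in> carrier G" using p assms by auto
    have "g \<otimes> y \<otimes> inv y = g" using y assms by (simp add: m_assoc)
    then show "p \<in> {p \<in> A \<times> B. (\<lambda>(x, y). x \<otimes> inv y) p = g}"
      using p by auto
  qed
  also have "card \<dots> = Ncnt G A B g" unfolding Ncnt_def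
    by (rule card_image) (auto simp: inj_on_def)
  finally show ?thesis .
qed

lemma Ncnt_UN_left:
  assumes "finite I" "finite B" "\<forall>i\<in>I. \<forall>j\<in>I. i \<noteq> j \<longrightarrow> A i \<inter> A j = {}"
  shows "Ncnt G (\<Union>i\<in>I. A i) B g = (\<Sum>i\<in>I. Ncnt G (A i) B g)"
proof -
  have "{y\<in>B. g \<otimes>\<^bsub>G\<^esub> y \<in> (\<Union>i\<in>I. A i)} = (\<Union>i\<in>I. {y\<in>B. g \<otimes>\<^bsub>G\<^esub> y \<in> A i})" by auto
  moreover have "card (\<Union>i\<in>I. {y\<in>B. g \<otimes>\<^bsub>G\<^esub> y \<in> A i}) = (\<Sum>i\<in>I. card {y\<in>B. g \<otimes>\<^bsub>G\<^esub> y \<in> A i})"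
    by (rule card_UN_disjoint) (use assms in auto)
  ultimately show ?thesis unfolding Ncnt_def by simp
qed

lemma Ncnt_UN_right:
  assumes "finite I" "\<forall>i\<in>I. finite (B i)" "\<forall>i\<in>I. \<forall>j\<in>I. i \<noteq> j \<longrightarrow> B i \<inter> B j = {}"
  shows "Ncnt G A (\<Union>i\<in>I. B i) g = (\<Sum>i\<in>I. Ncnt G A (B i) g)"
proof -
  have "{y\<in>(\<Union>i\<in>I. B i). g \<otimes>\<^bsub>G\<^esub> y \<in> A} = (\<Union>i\<in>I. {y\<in>B i. g \<otimes>\<^bsub>G\<^esub> y \<in> A})" by auto
  moreover have "card (\<Union>i\<in>I. {y\<in>B i. g \<otimes>\<^bsub>G\<^esub> y \<in> A}) = (\<Sum>i\<in>I. card {y\<in>B i. g \<otimes>\<^bsub>G\<^esub> y \<in> A})"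
    by (rule card_UN_disjoint) (use assms in auto)
  ultimately show ?thesis unfolding Ncnt_def by simp
qed

lemma Ncnt_Un_left:
  assumes "A1 \<inter> A2 = {}" "finite B"
  shows "Ncnt G (A1 \<union> A2) B g = Ncnt G A1 B g + Ncnt G A2 B g"
proof -
  have "{y\<in>B. g \<otimes>\<^bsub>G\<^esub> y \<in> A1 \<union> A2} = {y\<in>B. g \<otimes>\<^bsub>G\<^esub> y \<in> A1} \<union> {y\<in>B. g \<otimes>\<^bsub>G\<^esub> y \<in> A2}" by auto
  then show ?thesis unfolding Ncnt_def using assms by (simp add: card_Un_disjoint disjoint_iff)
qed

lemma Ncnt_Un_right:
  assumes "B1 \<inter> B2 = {}" "finite B1" "finite B2"
  shows "Ncnt G A (B1 \<union> B2) g = Ncnt G A B1 g + Ncnt G A B2 g"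
proof -
  have "{y\<in>B1 \<union> B2. g \<otimes>\<^bsub>G\<^esub> y \<in> A} = {y\<in>B1. g \<otimes>\<^bsub>G\<^esub> y \<in> A} \<union> {y\<in>B2. g \<otimes>\<^bsub>G\<^esub> y \<in> A}" by auto
  then show ?thesis unfolding Ncnt_def using assms by (simp add: card_Un_disjoint disjoint_iff)
qed

lemma arith1:
  fixes xx ss n :: nat
  assumes "xx + n*(n-2) = ss" "ss + n + n = ((n-1)^2+1)*n" "2 \<le> n"
  shows "xx = n*(n-1)*(n-2)"
proof -
  obtain k where k: "n = k + 2" using assms(3) by (metis add.commute le_iff_add)
  show ?thesis using assms(1,2) unfolding k by (simp add: power2_eq_square algebra_simps)
qed
lemma arith2:
  fixes xx ss n :: nat
  assumes "xx = ss" "ss + n = ((n-1)^2+1)*n" "1 \<le> n"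
  shows "xx = n*(n-1)^2"
proof -
  obtain k where k: "n = k + 1" using assms(3) by (metis add.commute le_iff_add)
  show ?thesis using assms(1,2) unfolding k by (simp add: power2_eq_square algebra_simps)
qed

context normal begin

lemma comm_H:
  assumes "a \<in> carrier G" "b \<in> carrier G" "a \<otimes> b \<in> H"
  shows "b \<otimes> a \<in> H"
proof -
  have "inv a \<otimes> (a \<otimes> b) \<otimes> inv (inv a) \<in> H"
    using inv_op_closed2[of "inv a" "a \<otimes> b"] assms by simp
  also have "inv a \<otimes> (a \<otimes> b) \<otimes> inv (inv a) = b \<otimes> a"
    using assms by (simp add: m_assoc[symmetric])
  finally show ?thesis .
qed

lemma main_core:
  assumes fin: "finite (carrier G)"
    and mdef: "m = (n - 1)^2 + 1"
    and ord: "order G = m * n"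
    and cH: "card H = n"
    and ds: "difference_set G (m * n) ((n - 1)^2 + n) n D"
    and HD: "H \<subseteq> D"
    and Rdef: "R = D - H"
  shows "relative_difference_set G m n (m - 1) (n - 2) H R
     \<and> DPDF G (n * ((n - 1)^2 + 1)) n ((n - 1)^2) (n * (n - 2)) 0 H (\<lambda>h. h <# R)
     \<and> EPDF G (n * ((n - 1)^2 + 1)) n ((n - 1)^2) (n * (n - 1) * (n - 2)) (n * (n - 1)^2)
          H (\<lambda>h. h <# R)"
proof -
  have Hc: "H \<subseteq> carrier G" by (rule subset)
  have finH: "finite H" using fin Hc finite_subset by blast
  have Dc: "D \<subseteq> carrier G" and cD: "card D = (n - 1)^2 + n"
    and cntD: "\<forall>g \<in> carrier G - {\<one>}. count (diff_mset G D) g = n"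
    using ds unfolding difference_set_def by auto
  have finD: "finite D" using fin Dc finite_subset by blast
  have Rc: "R \<subseteq> carrier G" using Dc Rdef by auto
  have finR: "finite R" using finD Rdef by auto
  have RH: "R \<inter> H = {}" using Rdef by auto
  have DHR: "D = H \<union> R" using Rdef HD by auto
  have cR: "card R = (n - 1)^2"
    using cD DHR RH finH finR card_Un_disjoint[of H R] cH by (simp add: Int_commute)
  have oneH: "\<one> \<in> H" by (rule subgroup.one_closed[OF subgroup_axioms])
  have npos: "n \<ge> 1" using cH finH oneH by (metis One_nat_def Suc_leI card_gt_0_iff empty_iff)
  have ND: "Ncnt G D D g = n" if "g \<in> carrier G" "g \<noteq> \<one>" for g
    using cntD cnt_diff[OF Dc finD that] that by auto
  have decomp: "Ncnt G D D g = Ncnt G H H g + Ncnt G H R g + Ncnt G R H g + Ncnt G R R g" for g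
    unfolding DHR using RH finH finR
    by (simp add: Ncnt_Un_left Ncnt_Un_right Int_commute)
  have NHH1: "Ncnt G H H g = n" if "g \<in> H" for g
  proof -
    have "{y\<in>H. g \<otimes> y \<in> H} = H" using that by auto
    then show ?thesis unfolding Ncnt_def using cH by simp
  qed
  have NHH0: "Ncnt G H H g = 0" if "g \<in> carrier G - H" for g
  proof -
    have "{y\<in>H. g \<otimes> y \<in> H} = {}"
    proof (rule ccontr)
      assume "{y\<in>H. g \<otimes> y \<in> H} \<noteq> {}"
      then obtain y where y: "y \<in> H" "g \<otimes> y \<in> H" by auto
      have yc: "y \<in> carrier G" using y Hc by blast
      have "g \<otimes> y \<otimes> inv y \<in> H"
        using y subgroup.m_closed[OF subgroup_axioms] subgroup.m_inv_closed[OF subgroup_axioms] by blast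
      moreover have "g \<otimes> y \<otimes> inv y = g" using yc that by (simp add: m_assoc)
      ultimately show False using that by simp
    qed
    then show ?thesis unfolding Ncnt_def by (simp only: card.empty)
  qed
  have RR0: "Ncnt G R R g = 0" if "g \<in> H" "g \<noteq> \<one>" for g
  proof -
    have "g \<in> carrier G" using that Hc by auto
    then have "Ncnt G D D g = n" using ND that by auto
    then show ?thesis using decomp[of g] NHH1[OF that(1)] by linarith
  qed
  have U: "x = y" if "x \<in> R" "y \<in> R" "x \<otimes> inv y \<in> H" for x y
  proof (rule ccontr)
    assume ne: "x \<noteq> y"
    have xc: "x \<in> carrier G" and yc: "y \<in> carrier G" using that Rc by auto
    have "x \<otimes> inv y \<noteq> \<one>" using ne xc yc by (metis inv_equality inv_inv inv_closed)
    then have "Ncnt G R R (x \<otimes> inv y) = 0" using RR0 that by auto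
    moreover have "y \<in> {z\<in>R. (x \<otimes> inv y) \<otimes> z \<in> R}" using that xc yc by (simp add: m_assoc)
    ultimately show False unfolding Ncnt_def using finR
      by (metis (no_types, lifting) card_0_eq empty_iff finite_subset mem_Collect_eq subsetI)
  qed
  have cRc: "card (rcosets H) = m"
    using lagrange[OF subgroup_axioms] ord cH npos by simp
  have HinR: "H \<in> rcosets H"
    unfolding RCOSETS_def using coset_join2[OF one_closed subgroup_axioms] by force
  have finRC: "finite (rcosets H)" using fin unfolding RCOSETS_def by simp
  have E: "\<exists>r\<in>R. g \<otimes> inv r \<in> H" if gH: "g \<in> carrier G - H" for g
  proof -
    have gc: "g \<in> carrier G" using gH by blast
    let ?f = "\<lambda>r. H #> r"
    have inj: "inj_on ?f R"
    proof (rule inj_onI)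
      fix x y assume xy: "x \<in> R" "y \<in> R" "H #> x = H #> y"
      have xc: "x \<in> carrier G" using xy(1) Rc by blast
      have yc: "y \<in> carrier G" using xy(2) Rc by blast
      have "x \<in> H #> x" by (rule rcos_self[OF xc subgroup_axioms])
      then have "x \<in> H #> y" using xy(3) by simp
      then have "x \<otimes> inv y \<in> H" by (rule rcos_module_imp[OF is_group yc])
      then show "x = y" using U xy(1,2) by blast
    qed
    have sub: "?f ` R \<subseteq> rcosets H - {H}"
    proof
      fix c assume "c \<in> ?f ` R"
      then obtain r where r: "r \<in> R" "c = H #> r" by blast
      have rc: "r \<in> carrier G" using r(1) Rc by blast
      have "c \<in> rcosets H" using r(2) rcosetsI[OF Hc rc] by simp
      moreover have "c \<noteq> H"
      proof
        assume "c = H"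
        moreover have "r \<in> H #> r" by (rule rcos_self[OF rc subgroup_axioms])
        ultimately have "r \<in> H" using r(2) by simp
        then show False using r(1) RH by blast
      qed
      ultimately show "c \<in> rcosets H - {H}" by blast
    qed
    have c1: "card (?f ` R) = card R" by (rule card_image[OF inj])
    have c2: "card (rcosets H - {H}) = m - 1" using cRc HinR finRC by simp
    have "card (?f ` R) = card (rcosets H - {H})"
      using c1 c2 cR mdef by simp
    then have eq: "?f ` R = rcosets H - {H}"
      using sub finRC by (metis card_subset_eq finite_Diff)
    have "H #> g \<in> rcosets H" using rcosetsI[OF Hc gc] by simp
    moreover have gg: "g \<in> H #> g" by (rule rcos_self[OF gc subgroup_axioms])
    moreover have "H #> g \<noteq> H"
    proof
      assume "H #> g = H"
      then show False using gg gH by simp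
    qed
    ultimately have "H #> g \<in> ?f ` R" using eq by blast
    then obtain r where r: "r \<in> R" "H #> g = H #> r" by blast
    have rc: "r \<in> carrier G" using r(1) Rc by blast
    have "g \<in> H #> r" using gg r(2) by simp
    then have "g \<otimes> inv r \<in> H" by (rule rcos_module_imp[OF is_group rc])
    then show ?thesis using r(1) by blast
  qed
  have Hm: "a \<otimes> b \<in> H" if "a \<in> H" "b \<in> H" for a b
    using that subgroup.m_closed[OF subgroup_axioms] by blast
  have Hi: "inv a \<in> H" if "a \<in> H" for a
    using that subgroup.m_inv_closed[OF subgroup_axioms] by blast
  have NHR: "Ncnt G H R g = 1" if gH: "g \<in> carrier G - H" for g
  proof -
    have gc: "g \<in> carrier G" using gH by blast
    have "inv g \<notin> H"
    proof
      assume "inv g \<in> H"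
      then have "inv (inv g) \<in> H" by (rule Hi)
      then show False using gH gc by simp
    qed
    then obtain r where r: "r \<in> R" "inv g \<otimes> inv r \<in> H" using E[of "inv g"] gc by blast
    have rc: "r \<in> carrier G" using r(1) Rc by blast
    have "inv (inv g \<otimes> inv r) = r \<otimes> g" using gc rc by (simp add: inv_mult_group)
    then have "r \<otimes> g \<in> H" using Hi[OF r(2)] by simp
    then have gr: "g \<otimes> r \<in> H" using comm_H rc gc by blast
    have "{y\<in>R. g \<otimes> y \<in> H} = {r}"
    proof (intro Set.set_eqI HOL.iffI)
      fix y assume "y \<in> {y\<in>R. g \<otimes> y \<in> H}"
      then have y: "y \<in> R" "g \<otimes> y \<in> H" by auto
      have yc: "y \<in> carrier G" using y(1) Rc by blast
      have "inv (g \<otimes> r) \<otimes> (g \<otimes> y) \<in> H" using Hm[OF Hi[OF gr] y(2)] .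
      moreover have "inv (g \<otimes> r) \<otimes> (g \<otimes> y) = inv r \<otimes> y"
      proof -
        have "inv g \<otimes> (g \<otimes> y) = y" using gc yc by (simp add: m_assoc[symmetric])
        then show ?thesis using gc rc yc by (simp add: inv_mult_group m_assoc)
      qed
      ultimately have "inv r \<otimes> y \<in> H" by simp
      then have "y \<otimes> inv r \<in> H" using comm_H rc yc by blast
      then have "y = r" using U y(1) r(1) by blast
      then show "y \<in> {r}" by simp
    next
      fix y assume "y \<in> {r}"
      then show "y \<in> {y\<in>R. g \<otimes> y \<in> H}" using r(1) gr by simp
    qed
    then show ?thesis unfolding Ncnt_def by simp
  qed
  have NRH: "Ncnt G R H g = 1" if gH: "g \<in> carrier G - H" for g
  proof -
    have gc: "g \<in> carrier G" using gH by blast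
    obtain r where r: "r \<in> R" "g \<otimes> inv r \<in> H" using E[OF gH] by blast
    have rc: "r \<in> carrier G" using r(1) Rc by blast
    have "inv r \<otimes> g \<in> H" using comm_H r(2) rc gc by blast
    then have "inv (inv r \<otimes> g) \<in> H" by (rule Hi)
    moreover have "inv (inv r \<otimes> g) = inv g \<otimes> r" using gc rc by (simp add: inv_mult_group)
    ultimately have y0H: "inv g \<otimes> r \<in> H" by simp
    have gy0: "g \<otimes> (inv g \<otimes> r) = r" using gc rc by (simp add: m_assoc[symmetric])
    have "{y\<in>H. g \<otimes> y \<in> R} = {inv g \<otimes> r}"
    proof (intro Set.set_eqI HOL.iffI)
      fix y assume "y \<in> {y\<in>H. g \<otimes> y \<in> R}"
      then have y: "y \<in> H" "g \<otimes> y \<in> R" by auto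
      have yc: "y \<in> carrier G" using y(1) Hc by blast
      have y0c: "inv g \<otimes> r \<in> carrier G" using gc rc by simp
      have "y \<otimes> inv (inv g \<otimes> r) \<in> H" using Hm[OF y(1) Hi[OF y0H]] .
      then have "g \<otimes> (y \<otimes> inv (inv g \<otimes> r)) \<otimes> inv g \<in> H"
        using inv_op_closed2[OF gc] by blast
      moreover have "g \<otimes> (y \<otimes> inv (inv g \<otimes> r)) \<otimes> inv g = (g \<otimes> y) \<otimes> inv r"
        using gc rc yc by (simp add: inv_mult_group m_assoc)
      ultimately have "(g \<otimes> y) \<otimes> inv r \<in> H" by simp
      then have "g \<otimes> y = r" using U y(2) r(1) by blast
      then have "g \<otimes> y = g \<otimes> (inv g \<otimes> r)" using gy0 by simp
      then have "y = inv g \<otimes> r" using gc yc y0c l_cancel by blast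
      then show "y \<in> {inv g \<otimes> r}" by simp
    next
      fix y assume "y \<in> {inv g \<otimes> r}"
      then show "y \<in> {y\<in>H. g \<otimes> y \<in> R}" using y0H gy0 r(1) by simp
    qed
    then show ?thesis unfolding Ncnt_def by simp
  qed
  have RRn: "Ncnt G R R g + 2 = n" if gH: "g \<in> carrier G - H" for g
  proof -
    have "g \<noteq> \<one>" using gH oneH by blast
    then have "Ncnt G D D g = n" using ND gH by blast
    then show ?thesis using decomp[of g] NHH0[OF gH] NHR[OF gH] NRH[OF gH] by linarith
  qed
  have nHG: "H \<lhd> G" by (simp add: normal_def normal_axioms_def subgroup_axioms is_group coset_eq)
  have rc1: "\<forall>g \<in> carrier G - H. count (diff_mset G R) g = n - 2"
  proof
    fix g assume g: "g \<in> carrier G - H"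
    then have "g \<noteq> \<one>" using oneH by blast
    then have "count (diff_mset G R) g = Ncnt G R R g" using cnt_diff[OF Rc finR] g by blast
    then show "count (diff_mset G R) g = n - 2" using RRn[OF g] by simp
  qed
  have rc2: "\<forall>g \<in> H - {\<one>}. count (diff_mset G R) g = 0"
  proof
    fix g assume g: "g \<in> H - {\<one>}"
    have gc: "g \<in> carrier G" using g Hc by blast
    have g1: "g \<noteq> \<one>" using g by blast
    have "count (diff_mset G R) g = Ncnt G R R g" by (rule cnt_diff[OF Rc finR gc g1])
    then show "count (diff_mset G R) g = 0" using RR0[OF _ g1] g by simp
  qed
  have cRm: "card R = m - 1" using cR mdef by simp
  have part1: "relative_difference_set G m n (m - 1) (n - 2) H R"
    unfolding relative_difference_set_def by (intro conjI ord nHG cH Rc cRm rc1 rc2)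
  define A where "A = (\<lambda>h. h <# R)"
  define C where "C = carrier G - H"
  have finC: "finite C" unfolding C_def using fin by simp
  have memA: "x \<in> A h \<longleftrightarrow> inv h \<otimes> x \<in> R" if "h \<in> carrier G" "x \<in> carrier G" for h x
  proof
    assume "x \<in> A h"
    then obtain r where r: "r \<in> R" "x = h \<otimes> r" unfolding A_def l_coset_def by blast
    have "inv h \<otimes> x = r" using r that Rc by (auto simp: m_assoc[symmetric])
    then show "inv h \<otimes> x \<in> R" using r by simp
  next
    assume "inv h \<otimes> x \<in> R"
    moreover have "x = h \<otimes> (inv h \<otimes> x)" using that by (simp add: m_assoc[symmetric])
    ultimately show "x \<in> A h" unfolding A_def l_coset_def by blast
  qed
  have Aimg: "A h = (\<lambda>r. h \<otimes> r) ` R" for h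
    unfolding A_def l_coset_def by blast
  have Ac: "A h \<subseteq> carrier G" if "h \<in> H" for h
    using that Hc Rc unfolding Aimg by blast
  have finA: "finite (A h)" for h unfolding Aimg using finR by simp
  have cA: "card (A h) = card R" if "h \<in> H" for h
  proof -
    have hc: "h \<in> carrier G" using that Hc by blast
    have "inj_on (\<lambda>r. h \<otimes> r) R"
      using hc Rc by (intro inj_onI) (metis l_cancel subsetD)
    then show ?thesis unfolding Aimg by (rule card_image)
  qed
  have AC: "A h \<subseteq> C" if "h \<in> H" for h
  proof
    fix x assume x: "x \<in> A h"
    have hc: "h \<in> carrier G" using that Hc by blast
    have xc: "x \<in> carrier G" using x Ac[OF that] by blast
    have ix: "inv h \<otimes> x \<in> R" using memA[OF hc xc] x by blast
    show "x \<in> C"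
    proof (rule ccontr)
      assume "x \<notin> C"
      then have "x \<in> H" using xc unfolding C_def by blast
      then have "inv h \<otimes> x \<in> H" using Hm Hi that by blast
      then show False using ix RH by blast
    qed
  qed
  have Asub: "A h \<subseteq> carrier G - {\<one>}" if "h \<in> H" for h
    using AC[OF that] oneH unfolding C_def by blast
  have Adisj: "A h \<inter> A h' = {}" if "h \<in> H" "h' \<in> H" "h \<noteq> h'" for h h'
  proof (rule ccontr)
    assume "A h \<inter> A h' \<noteq> {}"
    then obtain r r' where r: "r \<in> R" "r' \<in> R" "h \<otimes> r = h' \<otimes> r'" unfolding Aimg by blast
    have hc: "h \<in> carrier G" and hc': "h' \<in> carrier G" using that Hc by blast+
    have rc: "r \<in> carrier G" and rc': "r' \<in> carrier G" using r Rc by blast+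
    have "r \<otimes> inv r' = inv h \<otimes> (h \<otimes> r) \<otimes> inv r'" using hc rc by (simp add: m_assoc[symmetric])
    also have "\<dots> = inv h \<otimes> (h' \<otimes> r') \<otimes> inv r'" using r(3) by simp
    also have "\<dots> = inv h \<otimes> h'" using hc hc' rc' by (simp add: m_assoc)
    finally have "r \<otimes> inv r' \<in> H" using Hm Hi that by simp
    then have "r = r'" using U r by blast
    then have "h = h'" using r(3) hc hc' rc by (metis r_cancel)
    then show False using that by blast
  qed
  have AU: "(\<Union>h\<in>H. A h) = C"
  proof (intro Set.equalityI Set.subsetI)
    fix x assume "x \<in> (\<Union>h\<in>H. A h)"
    then show "x \<in> C" using AC by blast
  next
    fix x assume x: "x \<in> C"
    then obtain r where r: "r \<in> R" "x \<otimes> inv r \<in> H" using E unfolding C_def by blast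
    have xc: "x \<in> carrier G" using x unfolding C_def by blast
    have rc: "r \<in> carrier G" using r Rc by blast
    have "x = (x \<otimes> inv r) \<otimes> r" using xc rc by (simp add: m_assoc)
    then have "x \<in> A (x \<otimes> inv r)" unfolding Aimg using r(1) by blast
    then show "x \<in> (\<Union>h\<in>H. A h)" using r(2) by blast
  qed
  have conjH: "inv h \<otimes> g \<otimes> h \<in> H \<longleftrightarrow> g \<in> H" if "h \<in> H" "g \<in> carrier G" for h g
  proof
    have hc: "h \<in> carrier G" using that Hc by blast
    assume "inv h \<otimes> g \<otimes> h \<in> H"
    then have "h \<otimes> (inv h \<otimes> g \<otimes> h) \<otimes> inv h \<in> H" using Hm Hi that by blast
    moreover have "h \<otimes> (inv h \<otimes> g \<otimes> h) \<otimes> inv h = g" using hc that by (simp add: m_assoc[symmetric]) (simp add: m_assoc)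
    ultimately show "g \<in> H" by simp
  next
    assume "g \<in> H"
    then show "inv h \<otimes> g \<otimes> h \<in> H" using Hm Hi that by blast
  qed
  have conj1: "inv h \<otimes> g \<otimes> h \<noteq> \<one>" if "h \<in> H" "g \<in> carrier G" "g \<noteq> \<one>" for h g
  proof
    have hc: "h \<in> carrier G" using that Hc by blast
    assume "inv h \<otimes> g \<otimes> h = \<one>"
    then have "h \<otimes> (inv h \<otimes> g \<otimes> h) \<otimes> inv h = \<one>" using hc by simp
    moreover have "h \<otimes> (inv h \<otimes> g \<otimes> h) \<otimes> inv h = g" using hc that by (simp add: m_assoc[symmetric]) (simp add: m_assoc)
    ultimately show False using that by simp
  qed
  have NA: "Ncnt G (A h) (A h) g = Ncnt G R R (inv h \<otimes> g \<otimes> h)" if "h \<in> H" "g \<in> carrier G" for h g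
  proof -
    have hc: "h \<in> carrier G" using that Hc by blast
    have "{y\<in>A h. g \<otimes> y \<in> A h} = (\<lambda>r. h \<otimes> r) ` {r\<in>R. (inv h \<otimes> g \<otimes> h) \<otimes> r \<in> R}"
    proof (intro Set.equalityI Set.subsetI)
      fix y assume "y \<in> {y\<in>A h. g \<otimes> y \<in> A h}"
      then have y: "y \<in> A h" "g \<otimes> y \<in> A h" by auto
      then obtain r where r: "r \<in> R" "y = h \<otimes> r" unfolding Aimg by blast
      have rc: "r \<in> carrier G" using r Rc by blast
      have "inv h \<otimes> (g \<otimes> y) \<in> R" using memA[OF hc] y(2) that hc rc r(2) by simp
      moreover have "inv h \<otimes> (g \<otimes> y) = (inv h \<otimes> g \<otimes> h) \<otimes> r" using r(2) hc rc that by (simp add: m_assoc)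
      ultimately show "y \<in> (\<lambda>r. h \<otimes> r) ` {r\<in>R. (inv h \<otimes> g \<otimes> h) \<otimes> r \<in> R}" using r by auto
    next
      fix y assume "y \<in> (\<lambda>r. h \<otimes> r) ` {r\<in>R. (inv h \<otimes> g \<otimes> h) \<otimes> r \<in> R}"
      then obtain r where r: "r \<in> R" "(inv h \<otimes> g \<otimes> h) \<otimes> r \<in> R" "y = h \<otimes> r" by blast
      have rc: "r \<in> carrier G" using r Rc by blast
      have "inv h \<otimes> (g \<otimes> y) = (inv h \<otimes> g \<otimes> h) \<otimes> r" using r(3) hc rc that by (simp add: m_assoc)
      then have "g \<otimes> y \<in> A h" using memA[OF hc] r(2,3) hc rc that by simp
      moreover have "y \<in> A h" using r unfolding Aimg by blast
      ultimately show "y \<in> {y\<in>A h. g \<otimes> y \<in> A h}" by blast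
    qed
    moreover have "inj_on (\<lambda>r. h \<otimes> r) {r\<in>R. (inv h \<otimes> g \<otimes> h) \<otimes> r \<in> R}"
      using hc Rc by (intro inj_onI) (metis (no_types, lifting) l_cancel mem_Collect_eq subsetD)
    ultimately show ?thesis unfolding Ncnt_def by (simp add: card_image)
  qed
  have IntC: "count (Int_mset G H A) g = (\<Sum>h\<in>H. Ncnt G R R (inv h \<otimes> g \<otimes> h))"
    if "g \<in> carrier G" "g \<noteq> \<one>" for g
    unfolding Int_mset_def count_sum
  proof (rule sum.cong[OF refl])
    fix h assume h: "h \<in> H"
    show "count (diff_mset G (A h)) g = Ncnt G R R (inv h \<otimes> g \<otimes> h)"
      using cnt_diff[OF Ac[OF h] finA that] NA[OF h that(1)] by simp
  qed
  have Int1: "count (Int_mset G H A) g = n * (n - 2)" if "g \<in> C" for g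
  proof -
    have gc: "g \<in> carrier G" and gH: "g \<notin> H" using that unfolding C_def by blast+
    have "g \<noteq> \<one>" using gH oneH by blast
    then have "count (Int_mset G H A) g = (\<Sum>h\<in>H. Ncnt G R R (inv h \<otimes> g \<otimes> h))" using IntC gc by blast
    also have "\<dots> = (\<Sum>h\<in>H. n - 2)"
    proof (rule sum.cong[OF refl])
      fix h assume h: "h \<in> H"
      have "inv h \<otimes> g \<otimes> h \<in> carrier G - H" using conjH[OF h gc] gH h Hc gc by blast
      then show "Ncnt G R R (inv h \<otimes> g \<otimes> h) = n - 2" using RRn by fastforce
    qed
    finally show ?thesis using cH by simp
  qed
  have Int2: "count (Int_mset G H A) g = 0" if "g \<in> H" "g \<noteq> \<one>" for g
  proof -
    have gc: "g \<in> carrier G" using that Hc by blast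
    have "count (Int_mset G H A) g = (\<Sum>h\<in>H. Ncnt G R R (inv h \<otimes> g \<otimes> h))" using IntC gc that by blast
    also have "\<dots> = (\<Sum>h\<in>H. 0)"
    proof (rule sum.cong[OF refl])
      fix h assume h: "h \<in> H"
      show "Ncnt G R R (inv h \<otimes> g \<otimes> h) = 0"
        using RR0 conjH[OF h gc] conj1[OF h gc] that by blast
    qed
    finally show ?thesis by simp
  qed
  have compl: "carrier G - ((\<Union>h\<in>H. A h) \<union> {\<one>}) = H - {\<one>}"
    using AU Hc unfolding C_def by blast
  have dfam: "disjoint_family_ksub G n ((n - 1)^2) H A"
    unfolding disjoint_family_ksub_def using finH cH Asub cA cR Adisj by auto
  have ordv: "order G = n * ((n - 1)^2 + 1)" using ord mdef by simp
  have part2: "DPDF G (n * ((n - 1)^2 + 1)) n ((n - 1)^2) (n * (n - 2)) 0 H A"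
    unfolding DPDF_def
  proof (intro conjI ordv dfam ballI)
    fix g assume "g \<in> (\<Union>h\<in>H. A h)"
    then show "count (Int_mset G H A) g = n * (n - 2)" using Int1 AU by blast
  next
    fix g assume "g \<in> carrier G - ((\<Union>h\<in>H. A h) \<union> {\<one>})"
    then show "count (Int_mset G H A) g = 0" using Int2 compl by blast
  qed
  have ExtC: "count (Ext_mset G H A) g = (\<Sum>h\<in>H. \<Sum>h'\<in>H - {h}. Ncnt G (A h) (A h') g)"
    if gc: "g \<in> carrier G" for g
    unfolding Ext_mset_def count_sum
  proof (rule sum.cong[OF refl], rule sum.cong[OF refl])
    fix h h' assume h: "h \<in> H" and h': "h' \<in> H - {h}"
    have h'H: "h' \<in> H" using h' by blast
    show "count (diff2_mset G (A h) (A h')) g = Ncnt G (A h) (A h') g"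
      by (rule cnt_diff2[OF Ac[OF h] Ac[OF h'H] finA finA gc])
  qed
  have Tot: "(\<Sum>h\<in>H. \<Sum>h'\<in>H. Ncnt G (A h) (A h') g) = Ncnt G C C g" for g
  proof -
    have "(\<Sum>h\<in>H. \<Sum>h'\<in>H. Ncnt G (A h) (A h') g) = (\<Sum>h\<in>H. Ncnt G (A h) (\<Union>h'\<in>H. A h') g)"
    proof (rule sum.cong[OF refl])
      fix h assume "h \<in> H"
      show "(\<Sum>h'\<in>H. Ncnt G (A h) (A h') g) = Ncnt G (A h) (\<Union>h'\<in>H. A h') g"
        by (rule Ncnt_UN_right[symmetric]) (use finH finA Adisj in auto)
    qed
    also have "\<dots> = Ncnt G (\<Union>h\<in>H. A h) (\<Union>h'\<in>H. A h') g"
      by (rule Ncnt_UN_left[symmetric]) (use finH finC AU Adisj in auto)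
    finally show ?thesis using AU by simp
  qed
  have Split: "(\<Sum>h\<in>H. \<Sum>h'\<in>H - {h}. Ncnt G (A h) (A h') g) + (\<Sum>h\<in>H. Ncnt G (A h) (A h) g) = Ncnt G C C g" for g
  proof -
    have "(\<Sum>h\<in>H. \<Sum>h'\<in>H. Ncnt G (A h) (A h') g) = (\<Sum>h\<in>H. Ncnt G (A h) (A h) g + (\<Sum>h'\<in>H - {h}. Ncnt G (A h) (A h') g))"
      by (rule sum.cong[OF refl]) (rule sum.remove[OF finH])
    then show ?thesis using Tot[of g] by (simp add: sum.distrib)
  qed
  have Diag: "(\<Sum>h\<in>H. Ncnt G (A h) (A h) g) = count (Int_mset G H A) g" if "g \<in> carrier G" "g \<noteq> \<one>" for g
    using IntC[OF that] NA that by simp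
  have cardC: "card C + n = m * n"
  proof -
    have "card C = card (carrier G) - card H" unfolding C_def using finH Hc by (simp add: card_Diff_subset)
    moreover have "card H \<le> card (carrier G)" using Hc fin by (simp add: card_mono)
    ultimately show ?thesis using ord cH unfolding order_def by simp
  qed
  have NCC1: "Ncnt G C C g = card C" if "g \<in> H" for g
  proof -
    have gc: "g \<in> carrier G" using that Hc by blast
    have "{y\<in>C. g \<otimes> y \<in> C} = C"
    proof (intro Set.equalityI Set.subsetI)
      fix y assume "y \<in> {y\<in>C. g \<otimes> y \<in> C}" then show "y \<in> C" by blast
    next
      fix y assume y: "y \<in> C"
      have yc: "y \<in> carrier G" and yH: "y \<notin> H" using y unfolding C_def by blast+
      have "g \<otimes> y \<notin> H"
      proof
        assume "g \<otimes> y \<in> H"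
        then have "inv g \<otimes> (g \<otimes> y) \<in> H" using Hm Hi that by blast
        then show False using yH gc yc by (simp add: m_assoc[symmetric])
      qed
      then show "y \<in> {y\<in>C. g \<otimes> y \<in> C}" using y gc yc unfolding C_def by simp
    qed
    then show ?thesis unfolding Ncnt_def by simp
  qed
  have NCC2: "Ncnt G C C g + n = card C" if gC: "g \<in> C" for g
  proof -
    have gc: "g \<in> carrier G" and gH: "g \<notin> H" using gC unfolding C_def by blast+
    have igH: "inv g \<notin> H"
    proof
      assume "inv g \<in> H"
      then have "inv (inv g) \<in> H" by (rule Hi)
      then show False using gH gc by simp
    qed
    have eq1: "C = {y\<in>C. g \<otimes> y \<in> C} \<union> {y\<in>C. g \<otimes> y \<in> H}" using gc unfolding C_def by auto
    have eq2: "{y\<in>C. g \<otimes> y \<in> H} = (\<lambda>h. inv g \<otimes> h) ` H"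
    proof (intro Set.equalityI Set.subsetI)
      fix y assume "y \<in> {y\<in>C. g \<otimes> y \<in> H}"
      then have y: "y \<in> carrier G" "g \<otimes> y \<in> H" unfolding C_def by auto
      have "y = inv g \<otimes> (g \<otimes> y)" using y gc by (simp add: m_assoc[symmetric])
      then show "y \<in> (\<lambda>h. inv g \<otimes> h) ` H" using y by blast
    next
      fix y assume "y \<in> (\<lambda>h. inv g \<otimes> h) ` H"
      then obtain h where h: "h \<in> H" "y = inv g \<otimes> h" by blast
      have hc: "h \<in> carrier G" using h Hc by blast
      have yc: "y \<in> carrier G" using h hc gc by simp
      have "y \<notin> H"
      proof
        assume "y \<in> H"
        then have "y \<otimes> inv h \<in> H" using Hm Hi h by blast
        moreover have "y \<otimes> inv h = inv g" using h hc gc by (simp add: m_assoc)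
        ultimately show False using igH by simp
      qed
      moreover have "g \<otimes> y = h" using h hc gc by (simp add: m_assoc[symmetric])
      ultimately show "y \<in> {y\<in>C. g \<otimes> y \<in> H}" using yc h unfolding C_def by simp
    qed
    have "card ((\<lambda>h. inv g \<otimes> h) ` H) = n"
    proof -
      have "inj_on (\<lambda>h. inv g \<otimes> h) H"
        using gc Hc by (intro inj_onI) (metis inv_closed l_cancel subsetD)
      then show ?thesis using cH by (simp add: card_image)
    qed
    moreover have "card C = card {y\<in>C. g \<otimes> y \<in> C} + card {y\<in>C. g \<otimes> y \<in> H}"
      by (subst eq1, rule card_Un_disjoint) (auto simp: C_def intro: rev_finite_subset[OF fin])
    ultimately show ?thesis using eq2 unfolding Ncnt_def by simp
  qed
  have part3: "EPDF G (n * ((n - 1)^2 + 1)) n ((n - 1)^2) (n * (n - 1) * (n - 2)) (n * (n - 1)^2) H A"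
    unfolding EPDF_def
  proof (intro conjI ordv dfam ballI)
    fix g assume "g \<in> (\<Union>h\<in>H. A h)"
    then have gC: "g \<in> C" using AU by blast
    have gc: "g \<in> carrier G" and gH: "g \<notin> H" using gC unfolding C_def by blast+
    have g1: "g \<noteq> \<one>" using gH oneH by blast
    have n2: "2 \<le> n" using RRn[of g] gc gH by fastforce
    have a: "count (Ext_mset G H A) g + n * (n - 2) = Ncnt G C C g"
      using ExtC[OF gc] Split[of g] Diag[OF gc g1] Int1[OF gC] by simp
    have b: "Ncnt G C C g + n + n = ((n - 1)^2 + 1) * n"
      using NCC2[OF gC] cardC mdef by simp
    show "count (Ext_mset G H A) g = n * (n - 1) * (n - 2)" by (rule arith1[OF a b n2])
  next
    fix g assume "g \<in> carrier G - ((\<Union>h\<in>H. A h) \<union> {\<one>})"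
    then have g: "g \<in> H" "g \<noteq> \<one>" using compl by blast+
    have gc: "g \<in> carrier G" using g Hc by blast
    have a: "count (Ext_mset G H A) g = Ncnt G C C g"
      using ExtC[OF gc] Split[of g] Diag[OF gc g(2)] Int2[OF g] by simp
    have b: "Ncnt G C C g + n = ((n - 1)^2 + 1) * n"
      using NCC1[OF g(1)] cardC mdef by simp
    show "count (Ext_mset G H A) g = n * (n - 1)^2" by (rule arith2[OF a b npos])
  qed
  show ?thesis using part1 part2 part3 unfolding A_def by blast
qed

end

theorem mainTheorem3:
  fixes G :: "('a, 'b) monoid_scheme" and H D R :: "'a set" and n m :: nat
  assumes "group G" and "finite (carrier G)"
    and "m = (n - 1)^2 + 1"
    and "order G = m * n"
    and "H \<lhd> G" and "card H = n"
    and "difference_set G (m * n) ((n - 1)^2 + n) n D"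
    and "H \<subseteq> D"
    and "R = D - H"
  shows "relative_difference_set G m n (m - 1) (n - 2) H R
     \<and> DPDF G (n * ((n - 1)^2 + 1)) n ((n - 1)^2) (n * (n - 2)) 0 H (\<lambda>h. h <#\<^bsub>G\<^esub> R)
     \<and> EPDF G (n * ((n - 1)^2 + 1)) n ((n - 1)^2) (n * (n - 1) * (n - 2)) (n * (n - 1)^2)
          H (\<lambda>h. h <#\<^bsub>G\<^esub> R)"
  using normal.main_core[OF assms(5) assms(2) assms(3) assms(4) assms(6) assms(7) assms(8) assms(9)] .

end
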